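(* Let $x_1,\dots,x_n\in\mathbb{R}^p$, let $u_1,\dots,u_s$ be points chosen from $\{x_1,\dots,x_n\}$, and let $k$ be a nonnegative base kernel such that all normalizing sums below are positive. For $1\le j\le s$ let $n_j$ be the number of $x_i$ whose nearest induced point is $u_j$. Define for $1\le i\le n$, $1\le j\le s$: $$A_{ij}=\frac{n_jk(x_i,u_j)}{\sum_{q=1}^nk(x_q,u_j)\sum_{q=1}^sn_qk(x_i,u_q)},\qquad Z_{ij}=\frac{A_{ij}}{\sum_{l=1}^sA_{il}},$$ let $\Lambda$ be the $s\times s$ diagonal matrix with $\Lambda_{jj}=\sum_{i=1}^nZ_{ij}$, and $L=I-(Z\Lambda^{-1}Z^\top)^{1/2}$ (with the positive semidefinite square root). Then the eigenvalues of $L$ are real and lie in $[0,1]$; in particular $0$ is the smallest eigenvalue of $L$. *)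

theory Defs
  imports "HOL-Analysis.Analysis"
begin

text \<open>Points x_1..x_n are indexed by the finite type 'n, induced points u_1..u_s by 's,
  and R^p is real^'p. The assignment c i is the (index of the) nearest induced point of x i.\<close>

definition cluster_size :: "('n::finite \<Rightarrow> 's) \<Rightarrow> 's \<Rightarrow> nat" where
  "cluster_size c j = card {i. c i = j}"

definition A_mat ::
  "(real^'p::finite \<Rightarrow> real^'p \<Rightarrow> real) \<Rightarrow> ('n::finite \<Rightarrow> real^'p) \<Rightarrow> ('s::finite \<Rightarrow> real^'p)
   \<Rightarrow> ('n \<Rightarrow> 's) \<Rightarrow> real^'s^'n" where
  "A_mat k x u c = (\<chi> i j. real (cluster_size c j) * k (x i) (u j) /
      ((\<Sum>q\<in>UNIV. k (x q) (u j)) * (\<Sum>q\<in>UNIV. real (cluster_size c q) * k (x i) (u q))))"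

definition Z_mat ::
  "(real^'p::finite \<Rightarrow> real^'p \<Rightarrow> real) \<Rightarrow> ('n::finite \<Rightarrow> real^'p) \<Rightarrow> ('s::finite \<Rightarrow> real^'p)
   \<Rightarrow> ('n \<Rightarrow> 's) \<Rightarrow> real^'s^'n" where
  "Z_mat k x u c = (\<chi> i j. A_mat k x u c $ i $ j / (\<Sum>l\<in>UNIV. A_mat k x u c $ i $ l))"

definition Lambda_mat ::
  "(real^'p::finite \<Rightarrow> real^'p \<Rightarrow> real) \<Rightarrow> ('n::finite \<Rightarrow> real^'p) \<Rightarrow> ('s::finite \<Rightarrow> real^'p)
   \<Rightarrow> ('n \<Rightarrow> 's) \<Rightarrow> real^'s^'s" where
  "Lambda_mat k x u c = (\<chi> j l. if j = l then (\<Sum>i\<in>UNIV. Z_mat k x u c $ i $ j) else 0)"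

definition psd_mat :: "real^'n^'n \<Rightarrow> bool" where
  "psd_mat M \<longleftrightarrow> transpose M = M \<and> (\<forall>v. 0 \<le> v \<bullet> (M *v v))"

definition psd_sqrt :: "real^'n^'n \<Rightarrow> real^'n^'n" where
  "psd_sqrt M = (THE R. psd_mat R \<and> R ** R = M)"

definition L_mat ::
  "(real^'p::finite \<Rightarrow> real^'p \<Rightarrow> real) \<Rightarrow> ('n::finite \<Rightarrow> real^'p) \<Rightarrow> ('s::finite \<Rightarrow> real^'p)
   \<Rightarrow> ('n \<Rightarrow> 's) \<Rightarrow> real^'n^'n" where
  "L_mat k x u c = mat 1 - psd_sqrt (Z_mat k x u c ** matrix_inv (Lambda_mat k x u c)
                                      ** transpose (Z_mat k x u c))"

definition cmat :: "real^'n^'m \<Rightarrow> complex^'n^'m" where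
  "cmat M = (\<chi> i j. complex_of_real (M $ i $ j))"

definition is_ceigenvalue :: "real^'n^'n \<Rightarrow> complex \<Rightarrow> bool" where
  "is_ceigenvalue M \<mu> \<longleftrightarrow> (\<exists>v. v \<noteq> 0 \<and> cmat M *v v = \<mu> *s v)"

end

theory Submission
  imports Defs
begin

lemma sym_inner:
  fixes A :: "real^'n^'n"
  assumes "transpose A = A"
  shows "(A *v x) \<bullet> y = x \<bullet> (A *v y)"
  by (metis assms dot_lmul_matrix vector_transpose_matrix)

lemma quad_zero:
  fixes a b :: real
  assumes "\<forall>t. 2*t*a + t^2*b \<le> 0"
  shows "a = 0"
proof -
  define t where "t = a / (\<bar>b\<bar> + 1)"
  have pos: "\<bar>b\<bar> + 1 > 0" by simp
  have h0: "2*t*a + t^2*b \<le> 0" using assms by blast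
  have ta: "t * (\<bar>b\<bar> + 1) = a" using pos unfolding t_def by simp
  have e1: "(2*t*a + t^2*b) * (\<bar>b\<bar> + 1)^2 = 2*a*(t*(\<bar>b\<bar> + 1))*(\<bar>b\<bar> + 1) + (t*(\<bar>b\<bar> + 1))^2*b"
    by (simp add: power2_eq_square algebra_simps)
  have e2: "(2*t*a + t^2*b) * (\<bar>b\<bar> + 1)^2 = a^2 * (2*\<bar>b\<bar> + 2 + b)"
    unfolding e1 ta by (simp add: power2_eq_square algebra_simps)
  have "(2*t*a + t^2*b) * (\<bar>b\<bar> + 1)^2 \<le> 0"
    using h0 by (simp add: mult_nonpos_nonneg)
  then have "a^2 * (2*\<bar>b\<bar> + 2 + b) \<le> 0" using e2 by simp
  moreover have "2*\<bar>b\<bar> + 2 + b > 0" by linarith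
  ultimately have "a^2 \<le> 0" by (simp add: mult_le_0_iff)
  then show ?thesis by simp
qed

lemma spectral_sub:
  fixes A :: "real^'n^'n"
  assumes symA: "transpose A = A"
  shows "subspace V \<Longrightarrow> (\<forall>v\<in>V. A *v v \<in> V) \<Longrightarrow>
    \<exists>B. B \<subseteq> V \<and> finite B \<and> (\<forall>b\<in>B. norm b = 1 \<and> A *v b = (b \<bullet> (A *v b)) *\<^sub>R b)
       \<and> pairwise orthogonal B \<and> V \<subseteq> span B"
proof (induction "dim V" arbitrary: V rule: less_induct)
  case less
  note sub = less.prems(1) and inv = less.prems(2)
  show ?case
  proof (cases "V = {0}")
    case True
    then show ?thesis by (intro exI[of _ "{}"]) auto
  next
    case False
    then obtain v0 where v0: "v0 \<in> V" "v0 \<noteq> 0"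
      using sub subspace_0 by blast
    let ?K = "{v\<in>V. norm v = 1}"
    have "?K = sphere 0 1 \<inter> V" by auto
    then have cK: "compact ?K"
      using compact_Int_closed[OF compact_sphere closed_subspace[OF sub]] by simp
    have "(1 / norm v0) *\<^sub>R v0 \<in> ?K"
      using v0 sub by (simp add: subspace_scale)
    then have neK: "?K \<noteq> {}" by blast
    have ctK: "continuous_on ?K (\<lambda>v. v \<bullet> (A *v v))"
      by (intro continuous_intros linear_continuous_on bounded_linear_inner_right) 
    obtain u where uK: "u \<in> ?K" and umax: "\<forall>y\<in>?K. y \<bullet> (A *v y) \<le> u \<bullet> (A *v u)"
      using continuous_attains_sup[OF cK neK ctK] by blast
    define l where "l = u \<bullet> (A *v u)"
    have uV: "u \<in> V" and nu: "norm u = 1" using uK by auto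
    have uu: "u \<bullet> u = 1" using nu by (simp add: norm_eq_1)
    have max: "w \<bullet> (A *v w) \<le> l * (w \<bullet> w)" if "w \<in> V" for w
    proof (cases "w = 0")
      case True then show ?thesis by simp
    next
      case False
      let ?w = "(1 / norm w) *\<^sub>R w"
      have "?w \<in> ?K" using that False sub by (simp add: subspace_scale)
      then have "?w \<bullet> (A *v ?w) \<le> l" using umax l_def by blast
      then have "(w \<bullet> (A *v w)) / (norm w)^2 \<le> l"
        by (simp add: matrix_vector_mult_scaleR power2_eq_square)
      then have "w \<bullet> (A *v w) \<le> l * (norm w)^2"
        using False by (simp add: divide_le_eq)
      then show ?thesis by (simp add: power2_norm_eq_inner)
    qed
    have key: "w \<bullet> (A *v u) = 0" if "w \<in> V" "w \<bullet> u = 0" for w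
    proof (rule quad_zero[where b = "w \<bullet> (A *v w) - l * (w \<bullet> w)"], intro allI)
      fix t :: real
      have "u + t *\<^sub>R w \<in> V" using that uV sub by (simp add: subspace_add subspace_scale)
      then have m: "(u + t *\<^sub>R w) \<bullet> (A *v (u + t *\<^sub>R w)) \<le> l * ((u + t *\<^sub>R w) \<bullet> (u + t *\<^sub>R w))"
        by (rule max)
      have s: "u \<bullet> (A *v w) = w \<bullet> (A *v u)"
        using sym_inner[OF symA, of u w] by (simp add: inner_commute)
      have "(u + t *\<^sub>R w) \<bullet> (A *v (u + t *\<^sub>R w)) = l + 2*t*(w \<bullet> (A *v u)) + t^2 * (w \<bullet> (A *v w))"
        using s by (simp add: l_def matrix_vector_right_distrib matrix_vector_mult_scaleR
            inner_add_left inner_add_right power2_eq_square algebra_simps)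
      moreover have "(u + t *\<^sub>R w) \<bullet> (u + t *\<^sub>R w) = 1 + t^2 * (w \<bullet> w)"
        using uu that(2) by (simp add: inner_add_left inner_add_right power2_eq_square inner_commute algebra_simps)
      ultimately show "2 * t * (w \<bullet> (A *v u)) + t\<^sup>2 * (w \<bullet> (A *v w) - l * (w \<bullet> w)) \<le> 0"
        using m by (simp add: algebra_simps)
    qed
    have eig: "A *v u = l *\<^sub>R u"
    proof -
      define w where "w = A *v u - l *\<^sub>R u"
      have wV: "w \<in> V" unfolding w_def using inv uV sub by (simp add: subspace_diff subspace_scale)
      have wu: "w \<bullet> u = 0" unfolding w_def using uu
        by (simp add: l_def inner_diff_left inner_diff_right inner_commute)
      have "w \<bullet> (A *v u) = 0" using key wV wu by blast
      then have "w \<bullet> w = 0" using wu by (simp add: w_def inner_diff_right)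
      then show ?thesis unfolding w_def by simp
    qed
    define W where "W = {w\<in>V. w \<bullet> u = 0}"
    have subW: "subspace W" unfolding W_def subspace_def using sub
      by (auto simp: subspace_0 subspace_add subspace_scale inner_add_left)
    have invW: "\<forall>w\<in>W. A *v w \<in> W"
    proof
      fix w assume "w \<in> W"
      then have "w \<in> V" "w \<bullet> u = 0" by (auto simp: W_def)
      moreover have "(A *v w) \<bullet> u = w \<bullet> (A *v u)" by (rule sym_inner[OF symA])
      ultimately show "A *v w \<in> W" using inv eig by (simp add: W_def)
    qed
    have WsV: "W \<subseteq> V" by (auto simp: W_def)
    have uW: "u \<notin> W" using uu by (simp add: W_def)
    have "dim W < dim V"
    proof (rule ccontr)
      assume "\<not> dim W < dim V"
      then have "dim V \<le> dim W" by simp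
      then have "W = V" using subspace_dim_equal[OF subW sub WsV] by blast
      then show False using uW uV by blast
    qed
    then obtain B' where B': "B' \<subseteq> W" "finite B'"
      "\<forall>b\<in>B'. norm b = 1 \<and> A *v b = (b \<bullet> (A *v b)) *\<^sub>R b"
      "pairwise orthogonal B'" "W \<subseteq> span B'"
      using less.hyps[OF _ subW invW] by blast
    show ?thesis
    proof (intro exI[of _ "insert u B'"] conjI)
      show "insert u B' \<subseteq> V" using B'(1) uV by (auto simp: W_def)
      show "finite (insert u B')" using B'(2) by simp
      show "\<forall>b\<in>insert u B'. norm b = 1 \<and> A *v b = (b \<bullet> (A *v b)) *\<^sub>R b"
        using B'(3) nu eig l_def by auto
      show "pairwise orthogonal (insert u B')"
      proof -
        have "\<forall>b\<in>B'. orthogonal u b \<and> orthogonal b u"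
          using B'(1) by (auto simp: W_def orthogonal_def inner_commute)
        then show ?thesis using B'(4) by (simp add: pairwise_insert)
      qed
      show "V \<subseteq> span (insert u B')"
      proof
        fix v assume vV: "v \<in> V"
        have "v - (v \<bullet> u) *\<^sub>R u \<in> W"
          using vV uV uu sub by (simp add: W_def subspace_diff subspace_scale inner_diff_left)
        then have "v - (v \<bullet> u) *\<^sub>R u \<in> span (insert u B')"
          using B'(5) span_mono[of B' "insert u B'"] by blast
        moreover have "(v \<bullet> u) *\<^sub>R u \<in> span (insert u B')"
          by (simp add: span_base span_mul)
        ultimately have "(v - (v \<bullet> u) *\<^sub>R u) + (v \<bullet> u) *\<^sub>R u \<in> span (insert u B')"
          by (rule span_add)
        then show "v \<in> span (insert u B')" by simp
      qed
    qed
  qed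
qed


lemma spectral:
  fixes A :: "real^'n^'n"
  assumes symA: "transpose A = A"
  obtains B where "finite B" "\<forall>b\<in>B. norm b = 1 \<and> A *v b = (b \<bullet> (A *v b)) *\<^sub>R b"
    "\<And>b c. b \<in> B \<Longrightarrow> c \<in> B \<Longrightarrow> b \<bullet> c = (if b = c then 1 else 0)"
    "\<And>v. v = (\<Sum>b\<in>B. (v \<bullet> b) *\<^sub>R b)"
proof -
  obtain B where B: "finite B" "\<forall>b\<in>B. norm b = 1 \<and> A *v b = (b \<bullet> (A *v b)) *\<^sub>R b"
    "pairwise orthogonal B" "UNIV \<subseteq> span B"
    using spectral_sub[OF symA, of UNIV] by auto
  have orth: "b \<bullet> c = (if b = c then 1 else 0)" if "b \<in> B" "c \<in> B" for b c
  proof (cases "b = c")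
    case True
    then show ?thesis using B(2) that by (simp add: norm_eq_1)
  next
    case False
    then show ?thesis using B(3) that by (auto simp: pairwise_def orthogonal_def)
  qed
  have exp: "v = (\<Sum>b\<in>B. (v \<bullet> b) *\<^sub>R b)" for v
  proof -
    define w where "w = v - (\<Sum>b\<in>B. (v \<bullet> b) *\<^sub>R b)"
    have "orthogonal w c" if "c \<in> B" for c
    proof -
      have "(\<Sum>b\<in>B. (v \<bullet> b) *\<^sub>R b) \<bullet> c = (\<Sum>b\<in>B. (v \<bullet> b) * (b \<bullet> c))"
        by (simp add: inner_sum_left)
      also have "\<dots> = (\<Sum>b\<in>B. if b = c then v \<bullet> b else 0)"
        by (rule sum.cong) (auto simp: orth that)
      also have "\<dots> = v \<bullet> c" using B(1) that by simp
      finally show ?thesis by (simp add: w_def orthogonal_def inner_diff_left)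
    qed
    then have "orthogonal w w"
      using orthogonal_to_span[of w B w] B(4) by (auto simp: orthogonal_commute)
    then have "w = 0" by (simp add: orthogonal_def)
    then show ?thesis by (simp add: w_def)
  qed
  show ?thesis using that B(1,2) orth exp by blast
qed

lemma matrix_eq_on_basis:
  fixes P Q :: "real^'n^'n"
  assumes "\<And>v. v = (\<Sum>b\<in>B. (v \<bullet> b) *\<^sub>R b)"
    and "\<And>b. b \<in> B \<Longrightarrow> P *v b = Q *v b"
  shows "P = Q"
proof -
  have "P *v v = Q *v v" for v
  proof -
    have "P *v v = P *v (\<Sum>b\<in>B. (v \<bullet> b) *\<^sub>R b)" using assms(1) by metis
    also have "\<dots> = (\<Sum>b\<in>B. (v \<bullet> b) *\<^sub>R (P *v b))"
      by (simp add: linear_sum[OF matrix_vector_mul_linear] matrix_vector_mult_scaleR)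
    also have "\<dots> = (\<Sum>b\<in>B. (v \<bullet> b) *\<^sub>R (Q *v b))"
      using assms(2) by simp
    also have "\<dots> = Q *v (\<Sum>b\<in>B. (v \<bullet> b) *\<^sub>R b)"
      by (simp add: linear_sum[OF matrix_vector_mul_linear] matrix_vector_mult_scaleR)
    also have "\<dots> = Q *v v" using assms(1) by metis
    finally show ?thesis .
  qed
  then show ?thesis by (simp add: matrix_eq)
qed

lemma psd_root_on_eigvec:
  fixes S M :: "real^'n^'n"
  assumes S: "psd_mat S" and SS: "S ** S = M" and ev: "M *v b = l *\<^sub>R b" and l: "l \<ge> 0"
  shows "S *v b = sqrt l *\<^sub>R b"
proof -
  have symS: "transpose S = S" using S by (simp add: psd_mat_def)
  have Sq: "0 \<le> v \<bullet> (S *v v)" for v using S by (simp add: psd_mat_def)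
  have SSv: "S *v (S *v v) = M *v v" for v using SS by (simp add: matrix_vector_mul_assoc)
  show ?thesis
  proof (cases "l = 0")
    case True
    have "(S *v b) \<bullet> (S *v b) = b \<bullet> (S *v (S *v b))" by (rule sym_inner[OF symS])
    also have "\<dots> = 0" using SSv ev True by simp
    finally show ?thesis using True by simp
  next
    case False
    define s where "s = sqrt l"
    have s: "s > 0" "s * s = l" using False l by (auto simp: s_def)
    define y where "y = S *v b - s *\<^sub>R b"
    have "S *v y + s *\<^sub>R y = S *v (S *v b) - (s * s) *\<^sub>R b"
      by (simp add: y_def matrix_vector_mult_diff_distrib matrix_vector_mult_scaleR algebra_simps)
    then have "S *v y + s *\<^sub>R y = 0" using SSv ev s by simp
    then have "S *v y = - (s *\<^sub>R y)" by (simp add: eq_neg_iff_add_eq_0)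
    then have "y \<bullet> (S *v y) = - s * (y \<bullet> y)" by simp
    then have "s * (y \<bullet> y) \<le> 0" using Sq[of y] by simp
    then have "y \<bullet> y \<le> 0" using s by (simp add: mult_le_0_iff)
    then have "y = 0" by (metis antisym inner_ge_zero inner_eq_zero_iff)
    then show ?thesis by (simp add: y_def s_def)
  qed
qed


lemma psd_sqrt_props:
  fixes M :: "real^'n^'n"
  assumes M: "psd_mat M"
  shows "psd_mat (psd_sqrt M) \<and> psd_sqrt M ** psd_sqrt M = M"
proof -
  have symM: "transpose M = M" using M by (simp add: psd_mat_def)
  obtain B where B: "finite B" "\<forall>b\<in>B. norm b = 1 \<and> M *v b = (b \<bullet> (M *v b)) *\<^sub>R b"
    and orth: "\<And>b c. b \<in> B \<Longrightarrow> c \<in> B \<Longrightarrow> b \<bullet> c = (if b = c then 1 else 0)"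
    and exp: "\<And>v. v = (\<Sum>b\<in>B. (v \<bullet> b) *\<^sub>R b)"
    using spectral[OF symM] by blast
  define lam where "lam b = b \<bullet> (M *v b)" for b
  have lam0: "lam b \<ge> 0" for b using M by (simp add: psd_mat_def lam_def)
  have evB: "M *v b = lam b *\<^sub>R b" if "b \<in> B" for b using B(2) that by (simp add: lam_def)
  define R :: "real^'n^'n" where "R = (\<chi> i j. \<Sum>b\<in>B. sqrt (lam b) * b$i * b$j)"
  have Rv: "R *v v = (\<Sum>b\<in>B. (sqrt (lam b) * (b \<bullet> v)) *\<^sub>R b)" for v
  proof -
    have "(R *v v) $ i = (\<Sum>b\<in>B. (sqrt (lam b) * (b \<bullet> v)) * b $ i)" for i
    proof -
      have "(R *v v) $ i = (\<Sum>j\<in>UNIV. (\<Sum>b\<in>B. sqrt (lam b) * b$i * b$j) * v$j)"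
        by (simp add: R_def matrix_vector_mult_def)
      also have "\<dots> = (\<Sum>j\<in>UNIV. \<Sum>b\<in>B. sqrt (lam b) * b$i * (b$j * v$j))"
        by (simp add: sum_distrib_right mult.assoc)
      also have "\<dots> = (\<Sum>b\<in>B. \<Sum>j\<in>UNIV. sqrt (lam b) * b$i * (b$j * v$j))"
        by (rule sum.swap)
      also have "\<dots> = (\<Sum>b\<in>B. (sqrt (lam b) * (b \<bullet> v)) * b $ i)"
        by (simp add: inner_vec_def sum_distrib_left mult_ac)
      finally show ?thesis .
    qed
    then show ?thesis by (simp add: vec_eq_iff sum_component)
  qed
  have Rb: "R *v c = sqrt (lam c) *\<^sub>R c" if "c \<in> B" for c
  proof -
    have "R *v c = (\<Sum>b\<in>B. (if b = c then sqrt (lam c) *\<^sub>R c else 0))"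
      unfolding Rv by (rule sum.cong) (auto simp: orth that)
    also have "\<dots> = sqrt (lam c) *\<^sub>R c" using B(1) that by simp
    finally show ?thesis .
  qed
  have symR: "transpose R = R"
    by (simp add: R_def transpose_def vec_eq_iff mult_ac)
  have psdR: "psd_mat R"
    unfolding psd_mat_def
  proof (intro conjI allI symR)
    fix v
    have "v \<bullet> (R *v v) = (\<Sum>b\<in>B. sqrt (lam b) * (b \<bullet> v) * (v \<bullet> b))"
      by (simp add: Rv inner_sum_right)
    also have "\<dots> \<ge> 0"
      by (rule sum_nonneg) (simp add: inner_commute mult.assoc lam0)
    finally show "0 \<le> v \<bullet> (R *v v)" .
  qed
  have RR: "R ** R = M"
  proof (rule matrix_eq_on_basis[OF exp])
    fix c assume c: "c \<in> B"
    have "(R ** R) *v c = R *v (R *v c)" by (simp add: matrix_vector_mul_assoc)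
    also have "\<dots> = (sqrt (lam c) * sqrt (lam c)) *\<^sub>R c"
      using c by (simp add: Rb matrix_vector_mult_scaleR)
    also have "\<dots> = M *v c" using c lam0 evB by simp
    finally show "(R ** R) *v c = M *v c" .
  qed
  have uniq: "S = R" if "psd_mat S \<and> S ** S = M" for S
  proof (rule matrix_eq_on_basis[OF exp])
    fix c assume c: "c \<in> B"
    show "S *v c = R *v c"
      using psd_root_on_eigvec[of S M c "lam c"] that evB[OF c] lam0 Rb[OF c] by simp
  qed
  have "\<exists>!S. psd_mat S \<and> S ** S = M"
    using psdR RR uniq by blast
  then show ?thesis unfolding psd_sqrt_def by (rule theI')
qed


lemma weighted_cs:
  fixes w a :: "'i \<Rightarrow> real"
  assumes fin: "finite I" and w0: "\<forall>i\<in>I. 0 \<le> w i" and dpos: "(\<Sum>i\<in>I. w i) > 0"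
  shows "(\<Sum>i\<in>I. w i * a i)^2 \<le> (\<Sum>i\<in>I. w i) * (\<Sum>i\<in>I. w i * (a i)^2)"
proof -
  define d where "d = (\<Sum>i\<in>I. w i)"
  define s where "s = (\<Sum>i\<in>I. w i * a i)"
  define m where "m = s / d"
  have "0 \<le> (\<Sum>i\<in>I. w i * (a i - m)^2)"
    using w0 by (intro sum_nonneg) simp
  also have "\<dots> = (\<Sum>i\<in>I. w i * (a i)^2) - 2 * m * s + m^2 * d"
    by (simp add: power2_eq_square algebra_simps sum.distrib sum_subtractf sum_distrib_left
        sum_distrib_right s_def d_def)
  also have "\<dots> = (\<Sum>i\<in>I. w i * (a i)^2) - s^2 / d"
    using dpos by (simp add: m_def d_def power2_eq_square field_simps)
  finally have "s^2 / d \<le> (\<Sum>i\<in>I. w i * (a i)^2)" by simp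
  then show ?thesis using dpos by (simp add: s_def d_def divide_le_eq mult.commute)
qed

lemma M_props:
  fixes Z :: "real^'s^'n" and d :: "'s \<Rightarrow> real"
  assumes Z0: "\<forall>i j. 0 \<le> Z$i$j" and rows: "\<forall>i. (\<Sum>j\<in>UNIV. Z$i$j) = 1"
    and d: "\<forall>l. d l = (\<Sum>i\<in>UNIV. Z$i$l)" and dpos: "\<forall>l. d l > 0"
  defines "M \<equiv> (\<chi> i j. \<Sum>l\<in>UNIV. Z$i$l * Z$j$l / d l) :: real^'n^'n"
  shows "psd_mat M" "M *v (\<chi> i. 1) = (\<chi> i. 1)" "\<forall>v. v \<bullet> (M *v v) \<le> v \<bullet> v"
proof -
  define y where "y v l = (\<Sum>i\<in>UNIV. Z$i$l * v$i)" for v l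
  have Mv: "(M *v v) $ i = (\<Sum>l\<in>UNIV. Z$i$l * y v l / d l)" for v i
  proof -
    have "(M *v v) $ i = (\<Sum>j\<in>UNIV. (\<Sum>l\<in>UNIV. Z$i$l * Z$j$l / d l) * v$j)"
      by (simp add: M_def matrix_vector_mult_def)
    also have "\<dots> = (\<Sum>j\<in>UNIV. \<Sum>l\<in>UNIV. Z$i$l / d l * (Z$j$l * v$j))"
      unfolding sum_distrib_right by (intro sum.cong refl) simp
    also have "\<dots> = (\<Sum>l\<in>UNIV. \<Sum>j\<in>UNIV. Z$i$l / d l * (Z$j$l * v$j))"
      by (rule sum.swap)
    also have "\<dots> = (\<Sum>l\<in>UNIV. Z$i$l * y v l / d l)"
      by (simp add: y_def sum_distrib_left sum_divide_distrib)
    finally show ?thesis .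
  qed
  have quad: "v \<bullet> (M *v v) = (\<Sum>l\<in>UNIV. (y v l)^2 / d l)" for v
  proof -
    have "v \<bullet> (M *v v) = (\<Sum>i\<in>UNIV. v$i * (\<Sum>l\<in>UNIV. Z$i$l * y v l / d l))"
      by (simp add: inner_vec_def Mv)
    also have "\<dots> = (\<Sum>i\<in>UNIV. \<Sum>l\<in>UNIV. (y v l / d l) * (Z$i$l * v$i))"
      by (simp add: sum_distrib_left mult_ac)
    also have "\<dots> = (\<Sum>l\<in>UNIV. \<Sum>i\<in>UNIV. (y v l / d l) * (Z$i$l * v$i))"
      by (rule sum.swap)
    also have "\<dots> = (\<Sum>l\<in>UNIV. (y v l)^2 / d l)"
      unfolding sum_distrib_left[symmetric] by (simp add: y_def power2_eq_square)
    finally show ?thesis .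
  qed
  have symM: "transpose M = M"
    by (simp add: M_def transpose_def vec_eq_iff mult_ac)
  show "psd_mat M" unfolding psd_mat_def
    using symM quad dpos by (auto intro!: sum_nonneg divide_nonneg_pos)
  show "M *v (\<chi> i. 1) = (\<chi> i. 1)"
  proof -
    have "(M *v (\<chi> i. 1)) $ i = 1" for i
    proof -
      have "(M *v (\<chi> i. 1)) $ i = (\<Sum>l\<in>UNIV. Z$i$l * d l / d l)"
        by (simp add: Mv y_def d)
      also have "\<dots> = (\<Sum>l\<in>UNIV. Z$i$l)" using dpos by (simp add: less_imp_neq[symmetric])
      finally show ?thesis using rows by simp
    qed
    then show ?thesis by (simp add: vec_eq_iff)
  qed
  show "\<forall>v. v \<bullet> (M *v v) \<le> v \<bullet> v"
  proof
    fix v :: "real^'n"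
    have "(y v l)^2 / d l \<le> (\<Sum>i\<in>UNIV. Z$i$l * (v$i)^2)" for l
    proof -
      have "(y v l)^2 \<le> d l * (\<Sum>i\<in>UNIV. Z$i$l * (v$i)^2)"
        unfolding y_def d[rule_format]
        using weighted_cs[of UNIV "\<lambda>i. Z$i$l" "\<lambda>i. v$i"] Z0 dpos d by simp
      then show ?thesis using dpos by (simp add: divide_le_eq mult.commute)
    qed
    then have "v \<bullet> (M *v v) \<le> (\<Sum>l\<in>UNIV. \<Sum>i\<in>UNIV. Z$i$l * (v$i)^2)"
      unfolding quad by (rule sum_mono)
    also have "\<dots> = (\<Sum>i\<in>UNIV. \<Sum>l\<in>UNIV. Z$i$l * (v$i)^2)" by (rule sum.swap)
    also have "\<dots> = (\<Sum>i\<in>UNIV. (v$i)^2)"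
      using rows by (simp add: sum_distrib_right[symmetric])
    also have "\<dots> = v \<bullet> v" by (simp add: inner_vec_def power2_eq_square)
    finally show "v \<bullet> (M *v v) \<le> v \<bullet> v" .
  qed
qed


lemma L_eig:
  fixes M :: "real^'n^'n"
  assumes psdM: "psd_mat M" and M1: "M *v (\<chi> i. 1) = (\<chi> i. 1)"
    and Mle: "\<forall>v. v \<bullet> (M *v v) \<le> v \<bullet> v"
  shows "(\<forall>\<mu>. is_ceigenvalue (mat 1 - psd_sqrt M) \<mu> \<longrightarrow> Im \<mu> = 0 \<and> 0 \<le> Re \<mu> \<and> Re \<mu> \<le> 1)
         \<and> is_ceigenvalue (mat 1 - psd_sqrt M) 0"
proof -
  define S where "S = psd_sqrt M"
  define L where "L = mat 1 - S"
  have S: "psd_mat S" "S ** S = M" using psd_sqrt_props[OF psdM] by (auto simp: S_def)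
  have symS: "transpose S = S" using S(1) by (simp add: psd_mat_def)
  have S0: "0 \<le> v \<bullet> (S *v v)" for v using S(1) by (simp add: psd_mat_def)
  have SSv: "S *v (S *v v) = M *v v" for v using S(2) by (simp add: matrix_vector_mul_assoc)
  have Sle: "v \<bullet> (S *v v) \<le> v \<bullet> v" for v
  proof -
    have "(S *v v) \<bullet> (S *v v) = v \<bullet> (S *v (S *v v))" by (rule sym_inner[OF symS])
    also have "\<dots> \<le> v \<bullet> v" using SSv Mle by simp
    finally have "(norm (S *v v))^2 \<le> (norm v)^2" by (simp add: power2_norm_eq_inner)
    then have n: "norm (S *v v) \<le> norm v" by (simp add: power2_le_iff_abs_le)
    have "v \<bullet> (S *v v) \<le> norm v * norm (S *v v)" by (rule norm_cauchy_schwarz)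
    also have "\<dots> \<le> norm v * norm v" using n by (simp add: mult_left_mono)
    finally show ?thesis by (simp add: power2_norm_eq_inner[symmetric] power2_eq_square)
  qed
  have symL: "transpose L = L" using symS by (simp add: L_def transpose_def vec_eq_iff mat_def) 
  have Lv: "L *v v = v - S *v v" for v by (simp add: L_def matrix_vector_mult_diff_rdistrib)
  have L0: "0 \<le> v \<bullet> (L *v v)" and L1: "v \<bullet> (L *v v) \<le> v \<bullet> v" for v
    using Sle[of v] S0[of v] by (auto simp: Lv inner_diff_right)
  have part1: "Im \<mu> = 0 \<and> 0 \<le> Re \<mu> \<and> Re \<mu> \<le> 1" if ev: "is_ceigenvalue L \<mu>" for \<mu>
  proof -
    obtain v where v: "v \<noteq> 0" "cmat L *v v = \<mu> *s v"
      using ev by (auto simp: is_ceigenvalue_def)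
    define a where "a = (\<chi> i. Re (v$i))"
    define b where "b = (\<chi> i. Im (v$i))"
    define \<alpha> where "\<alpha> = Re \<mu>"
    define \<beta> where "\<beta> = Im \<mu>"
    have comp: "(cmat L *v v) $ i = \<mu> * v $ i" for i using v(2) by simp
    have La: "L *v a = \<alpha> *\<^sub>R a - \<beta> *\<^sub>R b" and Lb: "L *v b = \<beta> *\<^sub>R a + \<alpha> *\<^sub>R b"
    proof -
      have "(L *v a) $ i = (\<alpha> *\<^sub>R a - \<beta> *\<^sub>R b) $ i \<and> (L *v b) $ i = (\<beta> *\<^sub>R a + \<alpha> *\<^sub>R b) $ i" for i
      proof -
        have ci: "(\<Sum>j\<in>UNIV. complex_of_real (L$i$j) * v$j) = \<mu> * v$i"
          using comp[of i] by (simp add: cmat_def matrix_vector_mult_def)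
        have r: "(\<Sum>j\<in>UNIV. L$i$j * Re (v$j)) = Re \<mu> * Re (v$i) - Im \<mu> * Im (v$i)"
          using arg_cong[OF ci, of Re] by (simp add: Re_sum)
        have m: "(\<Sum>j\<in>UNIV. L$i$j * Im (v$j)) = Re \<mu> * Im (v$i) + Im \<mu> * Re (v$i)"
          using arg_cong[OF ci, of Im] by (simp add: Im_sum)
        show ?thesis using r m
          by (simp add: a_def b_def \<alpha>_def \<beta>_def matrix_vector_mult_def)
      qed
      then show "L *v a = \<alpha> *\<^sub>R a - \<beta> *\<^sub>R b" "L *v b = \<beta> *\<^sub>R a + \<alpha> *\<^sub>R b"
        by (simp_all add: vec_eq_iff)
    qed
    have pos: "a \<bullet> a + b \<bullet> b > 0"
    proof -
      obtain i where "v $ i \<noteq> 0" using v(1) by (auto simp: vec_eq_iff)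
      then have "a $ i \<noteq> 0 \<or> b $ i \<noteq> 0" by (auto simp: a_def b_def complex_eq_iff)
      then have "a \<noteq> 0 \<or> b \<noteq> 0" by auto
      then show ?thesis by (metis add_nonneg_pos add_pos_nonneg inner_ge_zero inner_gt_zero_iff)
    qed
    have "b \<bullet> (L *v a) = a \<bullet> (L *v b)"
      using sym_inner[OF symL, of a b] by (simp add: inner_commute)
    then have "\<alpha> * (b \<bullet> a) - \<beta> * (b \<bullet> b) = \<beta> * (a \<bullet> a) + \<alpha> * (a \<bullet> b)"
      by (simp add: La Lb inner_diff_right inner_add_right)
    then have "\<beta> * (a \<bullet> a + b \<bullet> b) = 0" by (simp add: inner_commute algebra_simps)
    then have b0: "\<beta> = 0" using pos by simp
    have "a \<bullet> (L *v a) + b \<bullet> (L *v b) = \<alpha> * (a \<bullet> a + b \<bullet> b)"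
      using b0 by (simp add: La Lb algebra_simps)
    moreover have "0 \<le> a \<bullet> (L *v a) + b \<bullet> (L *v b)" using L0[of a] L0[of b] by simp
    moreover have "a \<bullet> (L *v a) + b \<bullet> (L *v b) \<le> a \<bullet> a + b \<bullet> b" using L1[of a] L1[of b] by simp
    ultimately have "0 \<le> \<alpha> * (a \<bullet> a + b \<bullet> b)" "\<alpha> * (a \<bullet> a + b \<bullet> b) \<le> 1 * (a \<bullet> a + b \<bullet> b)" by simp_all
    then have "0 \<le> \<alpha>" "\<alpha> \<le> 1" using pos
      by (simp_all add: zero_le_mult_iff mult_le_cancel_right)
    then show ?thesis using b0 by (simp add: \<alpha>_def \<beta>_def)
  qed
  have S1: "S *v (\<chi> i. 1) = (\<chi> i. 1)"
  proof -
    define w where "w = S *v (\<chi> i. 1) - (\<chi> i. (1::real))"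
    have "S *v w = - w"
      by (simp add: w_def matrix_vector_mult_diff_distrib SSv M1)
    then have "w \<bullet> (S *v w) = - (w \<bullet> w)" by simp
    then have "w \<bullet> w \<le> 0" using S0[of w] by simp
    then have "w = 0" by (metis antisym inner_ge_zero inner_eq_zero_iff)
    then show ?thesis by (simp add: w_def)
  qed
  have L1v: "L *v (\<chi> i. 1) = 0" by (simp add: Lv S1)
  have part2: "is_ceigenvalue L 0"
    unfolding is_ceigenvalue_def
  proof (intro exI[of _ "\<chi> i. (1::complex)"] conjI)
    show "(\<chi> i. (1::complex)) \<noteq> 0" by (simp add: vec_eq_iff)
    have "(cmat L *v (\<chi> i. 1)) $ i = 0" for i
    proof -
      have "(cmat L *v (\<chi> i. 1)) $ i = complex_of_real (\<Sum>j\<in>UNIV. L$i$j)"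
        by (simp add: cmat_def matrix_vector_mult_def)
      also have "(\<Sum>j\<in>UNIV. L$i$j) = (L *v (\<chi> i. 1)) $ i"
        by (simp add: matrix_vector_mult_def)
      finally show ?thesis using L1v by simp
    qed
    then show "cmat L *v (\<chi> i. 1) = 0 *s (\<chi> i. 1)" by (simp add: vec_eq_iff)
  qed
  show ?thesis using part1 part2 by (simp add: L_def S_def)
qed


lemma sum_delta_mult: "(\<Sum>m\<in>(UNIV::'a::finite set). (if j = m then a else 0) * f m) = (a * f j :: real)"
proof -
  have "(\<Sum>m\<in>(UNIV::'a set). (if j = m then a else 0) * f m) = (\<Sum>m\<in>UNIV. if j = m then a * f m else 0)"
    by (rule sum.cong) auto
  also have "\<dots> = a * f j" by (simp add: sum.delta)
  finally show ?thesis .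
qed
lemma diag_inv:
  fixes d :: "'s::finite \<Rightarrow> real"
  assumes "\<forall>l. d l > 0"
  shows "((\<chi> j l. if j = l then d j else 0) ** (\<chi> j l. if j = l then 1 / d j else 0) :: real^'s^'s) = mat 1"
   "((\<chi> j l. if j = l then 1 / d j else 0) ** (\<chi> j l. if j = l then d j else 0) :: real^'s^'s) = mat 1"
proof -
  have "\<forall>l. d l \<noteq> 0" using assms by (metis less_irrefl)
  then show "((\<chi> j l. if j = l then d j else 0) ** (\<chi> j l. if j = l then 1 / d j else 0) :: real^'s^'s) = mat 1"
   "((\<chi> j l. if j = l then 1 / d j else 0) ** (\<chi> j l. if j = l then d j else 0) :: real^'s^'s) = mat 1"
    by (auto simp: matrix_matrix_mult_def mat_def vec_eq_iff sum_delta_mult)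
qed
lemma diag_prod:
  fixes d :: "'s::finite \<Rightarrow> real" and Z :: "real^'s^'n::finite"
  shows "Z ** (\<chi> j l. if j = l then 1 / d j else 0) ** transpose Z = (\<chi> i j. \<Sum>l\<in>UNIV. Z$i$l * Z$j$l / d l)"
proof -
  have "(Z ** (\<chi> j l. if j = l then 1 / d j else 0)) $ i $ m = Z$i$m / d m" for i m
  proof -
    have "(Z ** (\<chi> j l. if j = l then 1 / d j else 0)) $ i $ m = (\<Sum>l\<in>UNIV. (if m = l then 1 / d m else 0) * Z$i$l)"
      unfolding matrix_matrix_mult_def by (simp add: mult.commute eq_commute) (rule sum.cong, auto)
    then show ?thesis by (simp add: sum_delta_mult)
  qed
  then show ?thesis by (simp add: matrix_matrix_mult_def transpose_def vec_eq_iff mult_ac)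
qed
theorem proposition1:
  fixes x :: "'n::finite \<Rightarrow> real^'p::finite"
    and u :: "'s::finite \<Rightarrow> real^'p"
    and c :: "'n \<Rightarrow> 's"
    and k :: "real^'p \<Rightarrow> real^'p \<Rightarrow> real"
  assumes u_from_x: "\<forall>j. \<exists>i. u j = x i"
    and nearest: "\<forall>i q. dist (x i) (u (c i)) \<le> dist (x i) (u q)"
    and k_nonneg: "\<forall>a b. 0 \<le> k a b"
    and pos1: "\<forall>j. 0 < (\<Sum>q\<in>UNIV. k (x q) (u j))"
    and pos2: "\<forall>i. 0 < (\<Sum>q\<in>UNIV. real (cluster_size c q) * k (x i) (u q))"
    and pos3: "\<forall>i. 0 < (\<Sum>l\<in>UNIV. A_mat k x u c $ i $ l)"
    and pos4: "\<forall>j. 0 < (\<Sum>i\<in>UNIV. Z_mat k x u c $ i $ j)"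
  shows "(\<forall>\<mu>. is_ceigenvalue (L_mat k x u c) \<mu> \<longrightarrow>
            Im \<mu> = 0 \<and> 0 \<le> Re \<mu> \<and> Re \<mu> \<le> 1)
         \<and> is_ceigenvalue (L_mat k x u c) 0"
proof -
  define A where "A = A_mat k x u c"
  define Z where "Z = Z_mat k x u c"
  define Lam where "Lam = Lambda_mat k x u c"
  define d where "d l = (\<Sum>i\<in>UNIV. Z$i$l)" for l
  have dd: "\<forall>l. d l = (\<Sum>i\<in>UNIV. Z$i$l)" by (simp add: d_def)
  have dpos: "\<forall>l. d l > 0" using pos4 by (simp add: d_def Z_def)
  have A0: "0 \<le> A$i$j" for i j
    unfolding A_def A_mat_def using k_nonneg pos1 pos2
    by (simp add: divide_nonneg_pos mult_pos_pos)
  have Z0: "\<forall>i j. 0 \<le> Z$i$j"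
    using A0 pos3 by (simp add: Z_def Z_mat_def A_def[symmetric] divide_nonneg_pos)
  have rows: "\<forall>i. (\<Sum>j\<in>UNIV. Z$i$j) = 1"
  proof
    fix i
    have "(\<Sum>j\<in>UNIV. Z$i$j) = (\<Sum>j\<in>UNIV. A$i$j / (\<Sum>l\<in>UNIV. A$i$l))"
      by (simp add: Z_def Z_mat_def A_def)
    also have "\<dots> = (\<Sum>j\<in>UNIV. A$i$j) / (\<Sum>l\<in>UNIV. A$i$l)"
      by (rule sum_divide_distrib[symmetric])
    finally have "(\<Sum>j\<in>UNIV. Z$i$j) = (\<Sum>j\<in>UNIV. A$i$j) / (\<Sum>l\<in>UNIV. A$i$l)" .
    moreover have "(\<Sum>l\<in>UNIV. A$i$l) \<noteq> 0" using pos3 unfolding A_def by (metis less_irrefl)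
    ultimately show "(\<Sum>j\<in>UNIV. Z$i$j) = 1" by simp
  qed
  have LamE: "Lam = (\<chi> j l. if j = l then d j else 0)"
    unfolding Lam_def Lambda_mat_def d_def Z_def by simp
  define D :: "real^'s^'s" where "D = (\<chi> j l. if j = l then 1 / d j else 0)"
  have LD: "Lam ** D = mat 1" and DL: "D ** Lam = mat 1"
    using diag_inv[OF dpos] by (simp_all add: LamE D_def)
  have inv: "matrix_inv Lam = D"
  proof -
    have "\<exists>A'. Lam ** A' = mat 1 \<and> A' ** Lam = mat 1" using LD DL by blast
    then have i: "Lam ** matrix_inv Lam = mat 1 \<and> matrix_inv Lam ** Lam = mat 1"
      unfolding matrix_inv_def by (rule someI_ex)
    have "matrix_inv Lam = matrix_inv Lam ** (Lam ** D)" by (simp add: LD)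
    also have "\<dots> = (matrix_inv Lam ** Lam) ** D" by (simp add: matrix_mul_assoc)
    also have "\<dots> = D" using i by simp
    finally show ?thesis .
  qed
  have ME: "Z ** matrix_inv Lam ** transpose Z = (\<chi> i j. \<Sum>l\<in>UNIV. Z$i$l * Z$j$l / d l)"
    unfolding inv D_def by (rule diag_prod)
  have props: "psd_mat (\<chi> i j. \<Sum>l\<in>UNIV. Z$i$l * Z$j$l / d l)"
    "(\<chi> i j. \<Sum>l\<in>UNIV. Z$i$l * Z$j$l / d l) *v (\<chi> i. 1) = (\<chi> i. 1)"
    "\<forall>v. v \<bullet> ((\<chi> i j. \<Sum>l\<in>UNIV. Z$i$l * Z$j$l / d l) *v v) \<le> v \<bullet> v"
    using M_props[OF Z0 rows dd dpos] by auto
  have Leq: "L_mat k x u c = mat 1 - psd_sqrt (\<chi> i j. \<Sum>l\<in>UNIV. Z$i$l * Z$j$l / d l)"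
    by (simp add: L_mat_def Z_def[symmetric] Lam_def[symmetric] ME)
  show ?thesis unfolding Leq by (rule L_eig[OF props])
qed

end
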